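(* Suppose Assumptions 1 and 2 hold, and let $\rho>2\mathcal{D}_{Z_\star}+1$, $\alpha>0$, $\beta\in(0,1)$. Let $\Omega_0,\Omega_t\in\mathcal{X}_0$ with $F(\Omega_t)\le F(\Omega_0)$, let $\bar W_t\in\mathbb{S}^n_+$ with $\operatorname{tr}(\bar W_t)=1$ and $P_t\in\mathbb{R}^{n\times r}$ with $P_t^\top P_t=I_r$. Let $(W_t^\star,y_t^\star)$ be a minimizer of $$\min_{W\in\hat{\mathcal W}(\bar W_t,P_t),\,y\in\mathbb{R}^m}\ \langle W-C,\Omega_t\rangle-\langle b-\mathcal{A}(\Omega_t),y\rangle+\tfrac{1}{2\alpha}\|W-C+\mathcal{A}^*(y)\|^2,$$ and let $\Omega_{t+1}:=\Omega_t+\frac1\alpha(W_t^\star-C+\mathcal{A}^*(y_t^\star))$. Assume the descent condition $$\beta\big(F(\Omega_t)-\hat F_{(\bar W_t,P_t)}(\Omega_{t+1})\big)\le F(\Omega_t)-F(\Omega_{t+1})$$ holds. Let $X^\star\in\mathcal{P}^\star$ and $e_t:=F(\Omega_t)-F(X^\star)$, and let $\mathcal{D}_{\Omega_0}:=\sup\{\|X\|: X\in\mathcal{X}_0,\ F(X)\le F(\Omega_0)\}$. Then: 1. $\mathcal{A}(\Omega_{t+1})=b$ and $\lambda_{\min}(\Omega_{t+1})\ge -e_t/(\mathcal{D}_{Z_\star}+1)$; 2. $W_t^\star\succeq0$ and $\|W_t^\star-C+\mathcal{A}^*(y_t^\star)\|^2\le\frac{2\alpha}{\beta}e_t$; 3.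 $-\frac{\rho\, e_t}{\mathcal{D}_{Z_\star}+1}-\mathcal{D}_{\Omega_0}\sqrt{\frac{2\alpha}{\beta}e_t}\ \le\ \langle C,\Omega_{t+1}\rangle-b^\top y_t^\star\ \le\ \frac{1-\beta}{\beta}e_t+\mathcal{D}_{\Omega_0}\sqrt{\frac{2\alpha}{\beta}e_t}.$
   Context: Data: $b\in\mathbb{R}^m$, $C,A_1,\dots,A_m\in\mathbb{S}^n$; $\langle X,Y\rangle=\operatorname{tr}(XY)$, $\|\cdot\|$ the Frobenius norm; $\mathcal{A}(X)=(\langle A_i,X\rangle)_{i=1}^m$, $\mathcal{A}^*(y)=\sum_iy_iA_i$. Primal SDP (P): $\min\langle C,X\rangle$ s.t. $\mathcal{A}(X)=b$, $X\succeq0$; dual SDP (D): $\max b^\top y$ s.t. $Z+\mathcal{A}^*(y)=C$, $Z\succeq0$. $\mathcal{P}^\star,\mathcal{D}^\star$: optimal solution sets of (P), (D). Assumption 1: $A_i$ linearly independent. Assumption 2: (P) and (D) strictly feasible. $\mathcal{D}_{Z_\star}:=\max_{(y^\star,Z^\star)\in\mathcal{D}^\star}\operatorname{tr}(Z^\star)$. $\mathcal{X}_0:=\{X\in\mathbb{S}^n:\mathcal{A}(X)=b\}$. Penalized objective $F(X):=\langle C,X\rangle+\rho\max\{\lambda_{\max}(-X),0\}$. For $\bar W\succeq0$ with $\operatorname{tr}\bar W=1$ and $P$ with orthonormal columns ($r$ of them): $\hat{\mathcal W}(\bar W,P):=\{\gamma\bar W+PSP^\top: S\in\mathbb{S}^r_+,\gamma\ge0,\gamma+\operatorname{tr}(S)\le\rho\}$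 and $\hat F_{(\bar W,P)}(X):=\langle C,X\rangle+\max_{W\in\hat{\mathcal W}(\bar W,P)}\langle W,-X\rangle$. (By the paper's Proposition 4.1, $\Omega_{t+1}$ is the minimizer of $\hat F_{(\bar W_t,P_t)}(X)+\frac\alpha2\|X-\Omega_t\|^2$ over $\mathcal{X}_0$.) *)

theory Defs
  imports "HOL-Analysis.Analysis"
begin

definition sym_mat :: "real^'n^'n \<Rightarrow> bool" where
  "sym_mat X \<longleftrightarrow> transpose X = X"

definition psd :: "real^'n^'n \<Rightarrow> bool" where
  "psd X \<longleftrightarrow> sym_mat X \<and> (\<forall>v. 0 \<le> v \<bullet> (X *v v))"

definition pd :: "real^'n^'n \<Rightarrow> bool" where
  "pd X \<longleftrightarrow> sym_mat X \<and> (\<forall>v. v \<noteq> 0 \<longrightarrow> 0 < v \<bullet> (X *v v))"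

definition frob :: "real^'n^'n \<Rightarrow> real^'n^'n \<Rightarrow> real" where
  "frob X Y = trace (X ** Y)"

definition fnorm :: "real^'n^'n \<Rightarrow> real" where
  "fnorm X = sqrt (\<Sum>i\<in>UNIV. \<Sum>j\<in>UNIV. (X $ i $ j)^2)"

definition eigvals :: "real^'n^'n \<Rightarrow> real set" where
  "eigvals X = {c. \<exists>v. v \<noteq> 0 \<and> X *v v = c *\<^sub>R v}"

definition lambda_max :: "real^'n^'n \<Rightarrow> real" where
  "lambda_max X = Max (eigvals X)"

definition lambda_min :: "real^'n^'n \<Rightarrow> real" where
  "lambda_min X = Min (eigvals X)"

definition opA :: "('m::finite \<Rightarrow> real^'n^'n) \<Rightarrow> real^'n^'n \<Rightarrow> real^'m" where
  "opA A X = (\<chi> i. frob (A i) X)"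

definition opAadj :: "('m::finite \<Rightarrow> real^'n^'n) \<Rightarrow> real^'m \<Rightarrow> real^'n^'n" where
  "opAadj A y = (\<Sum>i\<in>UNIV. (y $ i) *\<^sub>R A i)"

definition assumption1 :: "('m::finite \<Rightarrow> real^'n^'n) \<Rightarrow> bool" where
  "assumption1 A \<longleftrightarrow> (\<forall>c::real^'m. opAadj A c = 0 \<longrightarrow> c = 0)"

definition assumption2 :: "('m::finite \<Rightarrow> real^'n^'n) \<Rightarrow> real^'m \<Rightarrow> real^'n^'n \<Rightarrow> bool" where
  "assumption2 A b C \<longleftrightarrow>
     (\<exists>X. opA A X = b \<and> pd X) \<and> (\<exists>y Z. Z + opAadj A y = C \<and> pd Z)"

definition primal_feas :: "('m::finite \<Rightarrow> real^'n^'n) \<Rightarrow> real^'m \<Rightarrow> (real^'n^'n) set" where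
  "primal_feas A b = {X. opA A X = b \<and> psd X}"

definition primal_opt :: "('m::finite \<Rightarrow> real^'n^'n) \<Rightarrow> real^'m \<Rightarrow> real^'n^'n \<Rightarrow> (real^'n^'n) set" where
  "primal_opt A b C = {X \<in> primal_feas A b. \<forall>X' \<in> primal_feas A b. frob C X \<le> frob C X'}"

definition dual_feas :: "('m::finite \<Rightarrow> real^'n^'n) \<Rightarrow> real^'n^'n \<Rightarrow> ((real^'m) \<times> (real^'n^'n)) set" where
  "dual_feas A C = {(y, Z). Z + opAadj A y = C \<and> psd Z}"

definition dual_opt :: "('m::finite \<Rightarrow> real^'n^'n) \<Rightarrow> real^'m \<Rightarrow> real^'n^'n \<Rightarrow> ((real^'m) \<times> (real^'n^'n)) set" where
  "dual_opt A b C = {(y, Z) \<in> dual_feas A C. \<forall>(y', Z') \<in> dual_feas A C. b \<bullet> y' \<le> b \<bullet> y}"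

definition DZstar :: "('m::finite \<Rightarrow> real^'n^'n) \<Rightarrow> real^'m \<Rightarrow> real^'n^'n \<Rightarrow> real" where
  "DZstar A b C = Sup ((\<lambda>(y, Z). trace Z) ` dual_opt A b C)"

definition X0 :: "('m::finite \<Rightarrow> real^'n^'n) \<Rightarrow> real^'m \<Rightarrow> (real^'n^'n) set" where
  "X0 A b = {X. sym_mat X \<and> opA A X = b}"

definition Fpen :: "real^'n^'n \<Rightarrow> real \<Rightarrow> real^'n^'n \<Rightarrow> real" where
  "Fpen C \<rho> X = frob C X + \<rho> * max (lambda_max (- X)) 0"

definition What :: "real \<Rightarrow> real^'n^'n \<Rightarrow> real^'r^'n \<Rightarrow> (real^'n^'n) set" where
  "What \<rho> Wb P = {\<gamma> *\<^sub>R Wb + P ** S ** transpose P | \<gamma> S.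
       psd S \<and> \<gamma> \<ge> 0 \<and> \<gamma> + trace S \<le> \<rho>}"

definition Fhat :: "real^'n^'n \<Rightarrow> real \<Rightarrow> real^'n^'n \<Rightarrow> real^'r^'n \<Rightarrow> real^'n^'n \<Rightarrow> real" where
  "Fhat C \<rho> Wb P X = frob C X + Sup ((\<lambda>W. frob W (- X)) ` What \<rho> Wb P)"

definition subobj :: "('m::finite \<Rightarrow> real^'n^'n) \<Rightarrow> real^'m \<Rightarrow> real^'n^'n \<Rightarrow> real
     \<Rightarrow> real^'n^'n \<Rightarrow> real^'n^'n \<Rightarrow> real^'m \<Rightarrow> real" where
  "subobj A b C \<alpha> \<Omega> W y = frob (W - C) \<Omega> - (b - opA A \<Omega>) \<bullet> y
      + (1 / (2 * \<alpha>)) * (fnorm (W - C + opAadj A y))^2"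

definition DOmega :: "('m::finite \<Rightarrow> real^'n^'n) \<Rightarrow> real^'m \<Rightarrow> real^'n^'n \<Rightarrow> real \<Rightarrow> real^'n^'n \<Rightarrow> real" where
  "DOmega A b C \<rho> \<Omega>0 = Sup (fnorm ` {X \<in> X0 A b. Fpen C \<rho> X \<le> Fpen C \<rho> \<Omega>0})"

end

theory Submission
  imports Defs
begin

lemma sym_entry: "sym_mat X \<Longrightarrow> X $ i $ j = X $ j $ i"
  unfolding sym_mat_def by (metis transpose_def vec_lambda_beta)

lemma frob_sym: assumes "sym_mat Y" shows "frob X Y = inner X Y"
proof -
  have "frob X Y = (\<Sum>i\<in>UNIV. \<Sum>k\<in>UNIV. X$i$k * Y$k$i)"
    by (simp add: frob_def trace_def matrix_matrix_mult_def)
  also have "\<dots> = (\<Sum>i\<in>UNIV. \<Sum>k\<in>UNIV. X$i$k * Y$i$k)"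
    using sym_entry[OF assms] by simp
  also have "\<dots> = inner X Y" by (simp add: inner_vec_def)
  finally show ?thesis .
qed

lemma frob_comm: "frob X Y = frob Y X"
  unfolding frob_def by (rule trace_mul_sym)

lemma fnorm_norm: "fnorm X = norm X"
  unfolding fnorm_def norm_vec_def L2_set_def
  by (simp add: real_sqrt_pow2 sum_nonneg)

definition outer :: "real^'n \<Rightarrow> real^'n^'n" where
  "outer v = (\<chi> i j. v$i * v$j)"

lemma outer_mult: "outer v *v w = (v \<bullet> w) *\<^sub>R v"
  by (simp add: outer_def matrix_vector_mult_def inner_vec_def vec_eq_iff sum_distrib_left mult_ac)

lemma inner_outer: "inner X (outer v) = v \<bullet> (X *v v)"
  by (simp add: outer_def matrix_vector_mult_def inner_vec_def sum_distrib_left mult_ac)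

lemma inner_mat1: "inner X (mat 1) = trace (X::real^'n^'n)"
  by (simp add: mat_def inner_vec_def trace_def if_distrib cong: if_cong)

lemma sym_outer: "sym_mat (outer v)"
  by (simp add: sym_mat_def outer_def transpose_def vec_eq_iff mult.commute)

lemma sym_mult: assumes "sym_mat X" shows "(X *v u) \<bullet> w = u \<bullet> (X *v w)"
proof -
  have "X *v u = u v* X" using assms unfolding sym_mat_def
    by (metis vector_transpose_matrix)
  thus ?thesis by (simp add: dot_lmul_matrix)
qed

lemma quad_zero_aux:
  fixes a c :: real
  assumes "c \<ge> 0" "\<forall>t. 0 \<le> 2*t*a + t^2*c" shows "a = 0"
proof (rule ccontr)
  assume "a \<noteq> 0"
  define s where "s = 1/(c+1)"
  define t where "t = - (a * s)"
  have h0: "0 \<le> 2*t*a + t^2*c" using assms by auto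
  have s0: "s > 0" using assms(1) by (simp add: s_def)
  have "s*c < 1" using assms(1) by (simp add: s_def)
  hence "s*(s*c-2) < 0" using s0 by (intro mult_pos_neg) auto
  moreover have "a^2 > 0" using \<open>a\<noteq>0\<close> by simp
  ultimately have "a^2 * (s*(s*c-2)) < 0" by (metis mult_pos_neg)
  moreover have "2*t*a + t^2*c = a^2 * (s*(s*c-2))"
    by (simp add: t_def power2_eq_square algebra_simps)
  ultimately show False using h0 by simp
qed

lemma quad_pos_aux:
  fixes a c :: real
  assumes "c \<ge> 0" "\<forall>s. 0 < s \<and> s \<le> 1 \<longrightarrow> 0 \<le> s*a + s^2*c" shows "a \<ge> 0"
proof (rule ccontr)
  assume "\<not> a \<ge> 0"
  define s where "s = min 1 (-a/(2*c+1))"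
  have "a/(2*c+1) < 0" using \<open>\<not> a \<ge> 0\<close> assms(1) by (intro divide_neg_pos) auto
  hence s0: "0 < s" "s \<le> 1" by (auto simp: s_def)
  have "s*c \<le> (-a/(2*c+1))*c" using assms(1) by (intro mult_right_mono) (auto simp: s_def)
  also have "\<dots> < -a/2" using \<open>\<not> a \<ge> 0\<close> assms(1) by (simp add: field_simps)
  finally have "a + s*c < 0" using \<open>\<not> a \<ge> 0\<close> by linarith
  hence "s*(a+s*c) < 0" using s0 by (simp add: mult_pos_neg)
  moreover have "0 \<le> s*a + s^2*c" using assms s0 by auto
  ultimately show False by (simp add: algebra_simps power2_eq_square)
qed

lemma psd_quad_zero:
  fixes Y :: "real^'n^'n"
  assumes "sym_mat Y" "\<forall>w. 0 \<le> w \<bullet> (Y *v w)" "v \<bullet> (Y *v v) = 0"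
  shows "Y *v v = 0"
proof -
  have "\<forall>w. w \<bullet> (Y *v v) = 0"
  proof
    fix w
    have "\<forall>t. 0 \<le> 2*t*(w \<bullet> (Y *v v)) + t^2*(w \<bullet> (Y *v w))"
    proof
      fix t :: real
      have "0 \<le> (v + t *\<^sub>R w) \<bullet> (Y *v (v + t *\<^sub>R w))" using assms(2) by blast
      also have "\<dots> = v \<bullet> (Y *v v) + t * (v \<bullet> (Y *v w)) + t * (w \<bullet> (Y *v v)) + t^2 * (w \<bullet> (Y *v w))"
        by (simp add: matrix_vector_right_distrib matrix_vector_mult_scaleR inner_add_left inner_add_right power2_eq_square algebra_simps)
      also have "v \<bullet> (Y *v w) = w \<bullet> (Y *v v)"
        using sym_mult[OF assms(1), of v w] by (simp add: inner_commute)
      finally show "0 \<le> 2*t*(w \<bullet> (Y *v v)) + t^2*(w \<bullet> (Y *v w))" using assms(3) by simp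
    qed
    thus "w \<bullet> (Y *v v) = 0" using quad_zero_aux assms(2) by blast
  qed
  thus ?thesis by (metis inner_eq_zero_iff)
qed

lemma rayleigh_max:
  fixes X :: "real^'n^'n"
  shows "\<exists>v. norm v = 1 \<and> (\<forall>w. w \<bullet> (X *v w) \<le> (v \<bullet> (X *v v)) * (w \<bullet> w))"
proof -
  have cont: "continuous_on (sphere 0 1) (\<lambda>w::real^'n. w \<bullet> (X *v w))"
    by (intro continuous_intros continuous_on_compose2[OF matrix_vector_mult_linear_continuous_on]) auto
  have "sphere (0::real^'n) 1 \<noteq> {}" by (simp add: sphere_def) (metis norm_Basis SOME_Basis dist_0_norm)
  then obtain v where v: "v \<in> sphere 0 1" "\<forall>w\<in>sphere 0 1. w \<bullet> (X *v w) \<le> v \<bullet> (X *v v)"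
    using continuous_attains_sup[OF compact_sphere _ cont] by blast
  have "w \<bullet> (X *v w) \<le> (v \<bullet> (X *v v)) * (w \<bullet> w)" for w
  proof (cases "w = 0")
    case False
    define u where "u = (1/norm w) *\<^sub>R w"
    have "u \<in> sphere 0 1" using False by (simp add: u_def)
    hence "u \<bullet> (X *v u) \<le> v \<bullet> (X *v v)" using v by blast
    moreover have "u \<bullet> (X *v u) = (w \<bullet> (X *v w)) / (w \<bullet> w)"
      by (simp add: u_def matrix_vector_mult_scaleR power2_norm_eq_inner[symmetric] field_simps power2_eq_square)
    moreover have "w \<bullet> w > 0" using False by simp
    ultimately show ?thesis by (simp add: divide_le_eq)
  qed simp
  thus ?thesis using v by auto
qed

lemma sym_mat_iff: "sym_mat X \<longleftrightarrow> (\<forall>i j. X$i$j = X$j$i)"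
  unfolding sym_mat_def transpose_def vec_eq_iff by auto

lemma sym_mat_add[intro]: "sym_mat X \<Longrightarrow> sym_mat Y \<Longrightarrow> sym_mat (X + Y)"
  and sym_mat_diff[intro]: "sym_mat X \<Longrightarrow> sym_mat Y \<Longrightarrow> sym_mat (X - Y)"
  and sym_mat_scaleR[intro]: "sym_mat X \<Longrightarrow> sym_mat (c *\<^sub>R X)"
  and sym_mat_uminus[intro]: "sym_mat X \<Longrightarrow> sym_mat (- X)"
  and sym_mat_mat[intro]: "sym_mat (mat k :: real^'n^'n)"
  and sym_mat_zero[intro]: "sym_mat (0 :: real^'n^'n)"
  by (auto simp: sym_mat_iff mat_def)

lemma sym_mat_sum[intro]: "(\<And>i. i \<in> I \<Longrightarrow> sym_mat (f i)) \<Longrightarrow> sym_mat (\<Sum>i\<in>I. f i :: real^'n^'n)"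
  by (induction I rule: infinite_finite_induct) auto

lemma mat_scale_mult: "(c *\<^sub>R mat 1) *v (w::real^'n) = c *\<^sub>R w"
  by (metis scaleR_matrix_vector_assoc matrix_vector_mul_lid)

lemma lmax_props:
  fixes X :: "real^'n^'n"
  assumes "sym_mat X"
  shows "finite (eigvals X)" "lambda_max X \<in> eigvals X"
    "\<And>w. w \<bullet> (X *v w) \<le> lambda_max X * (w \<bullet> w)"
proof -
  obtain v where v: "norm v = 1" "\<forall>w. w \<bullet> (X *v w) \<le> (v \<bullet> (X *v v)) * (w \<bullet> w)"
    using rayleigh_max by blast
  define l where "l = v \<bullet> (X *v v)"
  define Y where "Y = l *\<^sub>R mat 1 - X"
  have Yw: "Y *v w = l *\<^sub>R w - X *v w" for w
    by (simp add: Y_def matrix_vector_mult_diff_rdistrib mat_scale_mult)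
  have vv: "v \<bullet> v = 1" using v(1) by (simp add: norm_eq_sqrt_inner)
  have "Y *v v = 0"
  proof (rule psd_quad_zero)
    show "sym_mat Y" using assms by (auto simp: Y_def)
    show "\<forall>w. 0 \<le> w \<bullet> (Y *v w)" using v(2) by (simp add: Yw inner_diff_right l_def)
    show "v \<bullet> (Y *v v) = 0" using vv by (simp add: Yw inner_diff_right l_def)
  qed
  hence Xv: "X *v v = l *\<^sub>R v" by (simp add: Yw)
  have v0: "v \<noteq> 0" using v(1) by auto
  have lin: "l \<in> eigvals X" using Xv v0 unfolding eigvals_def by blast
  have le: "c \<le> l" if c_in: "c \<in> eigvals X" for c
  proof -
    obtain u where u: "u \<noteq> 0" "X *v u = c *\<^sub>R u" using c_in by (auto simp: eigvals_def)
    have e1: "u \<bullet> (X *v u) = c * (u \<bullet> u)" using u(2) by simp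
    have e2: "u \<bullet> (X *v u) \<le> l * (u \<bullet> u)" using v(2) unfolding l_def by blast
    have "0 < u \<bullet> u" using u(1) by simp
    thus ?thesis using e1 e2 mult_right_le_imp_le[of c "u \<bullet> u" l] by simp
  qed
  define f where "f c = (SOME u. u \<noteq> 0 \<and> X *v u = c *\<^sub>R u)" for c
  have f: "f c \<noteq> 0 \<and> X *v f c = c *\<^sub>R f c" if "c \<in> eigvals X" for c
    unfolding f_def by (rule someI_ex) (use that in \<open>auto simp: eigvals_def\<close>)
  have inj: "inj_on f (eigvals X)"
  proof (rule inj_onI)
    fix c d assume cd: "c \<in> eigvals X" "d \<in> eigvals X" "f c = f d"
    have "c *\<^sub>R f c = X *v f c" using f[OF cd(1)] by simp
    also have "\<dots> = d *\<^sub>R f c" using f[OF cd(2)] cd(3) by simp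
    finally have "c *\<^sub>R f c = d *\<^sub>R f c" .
    thus "c = d" using f[OF cd(1)] by simp
  qed
  have orth: "pairwise orthogonal (f ` eigvals X)"
  proof (clarsimp simp: pairwise_def)
    fix c d assume cd: "c \<in> eigvals X" "d \<in> eigvals X" "f c \<noteq> f d"
    hence "c \<noteq> d" by auto
    have "c * (f c \<bullet> f d) = (X *v f c) \<bullet> f d" using f[OF cd(1)] by simp
    also have "\<dots> = f c \<bullet> (X *v f d)" by (rule sym_mult[OF assms])
    also have "\<dots> = d * (f c \<bullet> f d)" using f[OF cd(2)] by simp
    finally have "(c - d) * (f c \<bullet> f d) = 0" by (simp add: algebra_simps)
    thus "orthogonal (f c) (f d)" using \<open>c\<noteq>d\<close> by (simp add: orthogonal_def)
  qed
  have "independent (f ` eigvals X)"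
    by (rule pairwise_orthogonal_independent[OF orth]) (use f in force)
  hence "finite (f ` eigvals X)" using independent_bound by blast
  thus fin: "finite (eigvals X)" using inj by (rule finite_imageD)
  have "lambda_max X = l" unfolding lambda_max_def using fin lin le by (intro Max_eqI) auto
  thus "lambda_max X \<in> eigvals X" "\<And>w. w \<bullet> (X *v w) \<le> lambda_max X * (w \<bullet> w)"
    using lin v(2) l_def by auto
qed

lemma neg_mult: "(- X) *v w = - (X *v (w::real^'n))"
  by (simp add: matrix_vector_mult_def vec_eq_iff sum_negf)

definition mneg :: "real^'n^'n \<Rightarrow> real" where
  "mneg X = max (lambda_max (- X)) 0"

lemma mneg_nonneg: "mneg X \<ge> 0" by (simp add: mneg_def)

lemma quad_lower: assumes "sym_mat X" shows "w \<bullet> (X *v w) \<ge> - mneg X * (w \<bullet> w)"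
proof -
  have "w \<bullet> ((-X) *v w) \<le> lambda_max (-X) * (w \<bullet> w)"
    using lmax_props(3)[of "-X"] assms by auto
  moreover have "lambda_max (-X) * (w \<bullet> w) \<le> mneg X * (w \<bullet> w)"
    by (intro mult_right_mono) (auto simp: mneg_def)
  ultimately show ?thesis by (simp add: neg_mult)
qed

lemma psd_lmax_neg: assumes "psd X" shows "lambda_max (-X) \<le> 0"
proof -
  have s: "sym_mat (-X)" using assms by (auto simp: psd_def)
  obtain v where v: "v \<noteq> 0" "(-X) *v v = lambda_max (-X) *\<^sub>R v"
    using lmax_props(2)[OF s] by (auto simp: eigvals_def)
  have "lambda_max (-X) * (v \<bullet> v) = v \<bullet> ((-X) *v v)" using v(2) by simp
  also have "\<dots> = - (v \<bullet> (X *v v))" by (simp add: neg_mult)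
  also have "\<dots> \<le> 0" using assms by (simp add: psd_def)
  finally have h: "lambda_max (-X) * (v \<bullet> v) \<le> 0" .
  have pos: "v \<bullet> v > 0" using v(1) by simp
  show ?thesis using h pos by (auto simp: mult_le_0_iff)
qed

lemma psd_mneg: assumes "psd X" shows "mneg X = 0"
  using psd_lmax_neg[OF assms] by (simp add: mneg_def max_def)

lemma psd_shift: fixes X :: "real^'n^'n" assumes "sym_mat X" shows "psd (X + mneg X *\<^sub>R mat 1)"
  unfolding psd_def
proof (intro conjI allI)
  show "sym_mat (X + mneg X *\<^sub>R mat 1)" using assms by auto
  fix v :: "real^'n"
  have "v \<bullet> ((X + mneg X *\<^sub>R mat 1) *v v) = v \<bullet> (X *v v) + mneg X * (v \<bullet> v)"
    by (simp add: matrix_vector_mult_add_rdistrib mat_scale_mult inner_add_right)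
  thus "0 \<le> v \<bullet> ((X + mneg X *\<^sub>R mat 1) *v v)" using quad_lower[OF assms, of v] by linarith
qed

lemma lmin_ge: assumes "sym_mat X" shows "lambda_min X \<ge> - mneg X"
proof -
  have fin: "finite (eigvals X)" and ne: "eigvals X \<noteq> {}" using lmax_props[OF assms] by auto
  have fin2: "finite (eigvals (-X))" using lmax_props(1)[of "-X"] assms by auto
  have "- mneg X \<le> c" if "c \<in> eigvals X" for c
  proof -
    have "-c \<in> eigvals (-X)" using that by (auto simp: eigvals_def neg_mult)
    hence "-c \<le> lambda_max (-X)" unfolding lambda_max_def using fin2 by simp
    thus ?thesis by (simp add: mneg_def)
  qed
  thus ?thesis unfolding lambda_min_def using fin ne by (simp add: Min_ge_iff)
qed

lemma psd_outer: "psd (outer v)"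
  unfolding psd_def using sym_outer by (simp add: outer_mult inner_commute)

lemma psd_add[intro]: "psd X \<Longrightarrow> psd Y \<Longrightarrow> psd (X + Y)"
  by (auto simp: psd_def matrix_vector_mult_add_rdistrib inner_add_right)

lemma psd_scaleR[intro]: "psd X \<Longrightarrow> c \<ge> 0 \<Longrightarrow> psd (c *\<^sub>R X)"
  by (auto simp: psd_def scaleR_matrix_vector_assoc[symmetric])

lemma psd_zero[intro]: "psd (0::real^'n^'n)"
  by (auto simp: psd_def)

lemma pd_bound: fixes X :: "real^'n^'n" assumes "pd X" shows "\<exists>\<mu>>0. \<forall>v. \<mu> * (v \<bullet> v) \<le> v \<bullet> (X *v v)"
proof -
  have cont: "continuous_on (sphere 0 1) (\<lambda>w::real^'n. w \<bullet> (X *v w))"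
    by (intro continuous_intros continuous_on_compose2[OF matrix_vector_mult_linear_continuous_on]) auto
  have "sphere (0::real^'n) 1 \<noteq> {}" by (simp add: sphere_def) (metis norm_Basis SOME_Basis dist_0_norm)
  then obtain v where v: "v \<in> sphere 0 1" "\<forall>w\<in>sphere 0 1. v \<bullet> (X *v v) \<le> w \<bullet> (X *v w)"
    using continuous_attains_inf[OF compact_sphere _ cont] by blast
  have "v \<noteq> 0" using v(1) by auto
  hence mu: "v \<bullet> (X *v v) > 0" using assms by (auto simp: pd_def)
  have "(v \<bullet> (X *v v)) * (w \<bullet> w) \<le> w \<bullet> (X *v w)" for w
  proof (cases "w = 0")
    case False
    define u where "u = (1/norm w) *\<^sub>R w"
    have "u \<in> sphere 0 1" using False by (simp add: u_def)
    hence "v \<bullet> (X *v v) \<le> u \<bullet> (X *v u)" using v by blast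
    moreover have "u \<bullet> (X *v u) = (w \<bullet> (X *v w)) / (w \<bullet> w)"
      by (simp add: u_def matrix_vector_mult_scaleR power2_norm_eq_inner[symmetric] field_simps power2_eq_square)
    moreover have "w \<bullet> w > 0" using False by simp
    ultimately show ?thesis by (simp add: le_divide_eq)
  qed simp
  thus ?thesis using mu by blast
qed

lemma outer_inner_zero: "inner (outer v) (outer v) = (v \<bullet> v)^2"
  by (simp add: inner_outer outer_mult power2_eq_square)

lemma null_subspace: "subspace {u. (X::real^'n^'n) *v u = 0}"
  unfolding subspace_def by (auto simp: matrix_vector_right_distrib matrix_vector_mult_scaleR)

lemma psd_inner_nonneg_aux:
  fixes Z :: "real^'n^'n"
  assumes Z: "psd Z"
  shows "\<forall>X. psd X \<longrightarrow> DIM(real^'n) - dim {u. X *v u = 0} = k \<longrightarrow> 0 \<le> inner Z X"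
proof (induction k rule: less_induct)
  case (less k)
  show ?case
  proof (intro allI impI)
    fix X :: "real^'n^'n"
    assume X: "psd X" and k: "DIM(real^'n) - dim {u. X *v u = 0} = k"
    have sX: "sym_mat X" using X by (simp add: psd_def)
    define l where "l = lambda_max X"
    obtain v where v: "v \<noteq> 0" "X *v v = l *\<^sub>R v"
      using lmax_props(2)[OF sX] by (auto simp: eigvals_def l_def)
    define u where "u = (1/norm v) *\<^sub>R v"
    have uu: "u \<bullet> u = 1" using v(1) by (simp add: u_def dot_square_norm power2_eq_square)
    have Xu: "X *v u = l *\<^sub>R u" using v(2) by (simp add: u_def matrix_vector_mult_scaleR)
    have lu: "u \<bullet> (X *v u) = l" using Xu uu by simp
    have l0: "l \<ge> 0" using X lu by (metis psd_def)
    have lmax: "w \<bullet> (X *v w) \<le> l * (w \<bullet> w)" for w using lmax_props(3)[OF sX] l_def by simp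
    show "0 \<le> inner Z X"
    proof (cases "l = 0")
      case True
      have "X *v w = 0" for w
        by (rule psd_quad_zero[OF sX]) (use X lmax[of w] True in \<open>auto simp: psd_def intro: antisym\<close>)
      hence "X = 0" by (simp add: matrix_eq)
      thus ?thesis by simp
    next
      case False
      hence lp: "l > 0" using l0 by simp
      define X' where "X' = X - l *\<^sub>R outer u"
      have X'w: "X' *v w = X *v w - (l * (u \<bullet> w)) *\<^sub>R u" for w
        by (simp add: X'_def matrix_vector_mult_diff_rdistrib scaleR_matrix_vector_assoc[symmetric] outer_mult)
      have sX': "sym_mat X'" using sX sym_outer by (auto simp: X'_def)
      have uXw: "u \<bullet> (X *v w) = l * (u \<bullet> w)" for w
        using sym_mult[OF sX, of u w] Xu by simp
      have "psd X'"
        unfolding psd_def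
      proof (intro conjI allI)
        show "sym_mat X'" by (rule sX')
        fix w :: "real^'n"
        define a where "a = u \<bullet> w"
        have "(w - a *\<^sub>R u) \<bullet> (X *v (w - a *\<^sub>R u)) = w \<bullet> (X *v w) - l * a^2"
          using uXw[of w] Xu uu
          by (simp add: matrix_vector_mult_diff_distrib matrix_vector_mult_scaleR inner_diff_left
              inner_diff_right inner_commute a_def power2_eq_square algebra_simps)
        also have "\<dots> = w \<bullet> (X' *v w)"
          by (simp add: X'w inner_diff_right a_def power2_eq_square inner_commute)
        finally show "0 \<le> w \<bullet> (X' *v w)" using X by (metis psd_def)
      qed
      have sub: "{w. X *v w = 0} \<subset> {w. X' *v w = 0}"
      proof
        show "{w. X *v w = 0} \<subseteq> {w. X' *v w = 0}"
        proof
          fix w assume "w \<in> {w. X *v w = 0}"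
          hence w0: "X *v w = 0" by simp
          have "l * (u \<bullet> w) = 0" using uXw[of w] w0 by simp
          thus "w \<in> {w. X' *v w = 0}" using w0 by (simp add: X'w)
        qed
        have "X' *v u = 0" using Xu uu by (simp add: X'w)
        moreover have "X *v u \<noteq> 0" using Xu uu lp by (auto simp: inner_eq_zero_iff)
        ultimately show "{w. X *v w = 0} \<noteq> {w. X' *v w = 0}" by blast
      qed
      have "dim {w. X *v w = 0} < dim {w. X' *v w = 0}"
        by (rule dim_psubset) (simp add: span_eq_iff[THEN iffD2, OF null_subspace] sub)
      moreover have "dim {w. X' *v w = 0} \<le> DIM(real^'n)" by (rule dim_subset_UNIV)
      ultimately have "DIM(real^'n) - dim {w. X' *v w = 0} < k" using k by linarith
      hence "0 \<le> inner Z X'" using less.IH \<open>psd X'\<close> by blast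
      moreover have "inner Z X = l * (u \<bullet> (Z *v u)) + inner Z X'"
        by (simp add: X'_def inner_diff_right inner_outer)
      moreover have "u \<bullet> (Z *v u) \<ge> 0" using Z by (simp add: psd_def)
      ultimately show ?thesis using l0 by simp
    qed
  qed
qed

lemma psd_inner_nonneg: "psd Z \<Longrightarrow> psd X \<Longrightarrow> 0 \<le> inner Z X"
  using psd_inner_nonneg_aux by blast

lemma trace_inner: "trace (X::real^'n^'n) = inner (mat 1) X"
  by (simp add: inner_mat1 inner_commute)

lemma psd_mat1: "psd (mat 1 :: real^'n^'n)"
  by (simp add: psd_def sym_mat_mat)

lemma psd_trace_nonneg: "psd X \<Longrightarrow> trace X \<ge> 0"
  using psd_inner_nonneg[OF psd_mat1, of X] by (simp add: trace_inner)

lemma trace_scaleR: "trace (c *\<^sub>R (X::real^'n^'n)) = c * trace X"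
  by (simp add: trace_def sum_distrib_left)

lemma mat_scale_mult': "(c *\<^sub>R mat 1 - Y) *v (w::real^'n) = c *\<^sub>R w - Y *v w"
  by (simp add: matrix_vector_mult_diff_rdistrib mat_scale_mult)

lemma psd_trace_norm:
  fixes Y :: "real^'n^'n"
  assumes Y: "psd Y" shows "norm Y \<le> trace Y"
proof -
  have sY: "sym_mat Y" using Y by (simp add: psd_def)
  define l where "l = lambda_max Y"
  obtain v where v: "v \<noteq> 0" "Y *v v = l *\<^sub>R v"
    using lmax_props(2)[OF sY] by (auto simp: eigvals_def l_def)
  define u where "u = (1/norm v) *\<^sub>R v"
  have uu: "u \<bullet> u = 1" using v(1) by (simp add: u_def dot_square_norm power2_eq_square)
  have Yu: "Y *v u = l *\<^sub>R u" using v(2) by (simp add: u_def matrix_vector_mult_scaleR)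
  have lu: "u \<bullet> (Y *v u) = l" using Yu uu by simp
  have l0: "l \<ge> 0" using Y lu by (metis psd_def)
  have lmax: "w \<bullet> (Y *v w) \<le> l * (w \<bullet> w)" for w using lmax_props(3)[OF sY] l_def by simp
  have p1: "psd (l *\<^sub>R mat 1 - Y)"
    unfolding psd_def using sY lmax by (auto simp: mat_scale_mult' inner_diff_right)
  have "0 \<le> inner (l *\<^sub>R mat 1 - Y) Y" by (rule psd_inner_nonneg[OF p1 Y])
  hence h1: "inner Y Y \<le> l * trace Y" by (simp add: inner_diff_left trace_inner)
  have p2: "psd (mat 1 - outer u)"
    unfolding psd_def
  proof (intro conjI allI)
    show "sym_mat (mat 1 - outer u)" using sym_outer by auto
    fix w :: "real^'n"
    have "(u \<bullet> w)^2 \<le> (u \<bullet> u) * (w \<bullet> w)" by (rule Cauchy_Schwarz_ineq)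
    thus "0 \<le> w \<bullet> ((mat 1 - outer u) *v w)"
      using uu by (simp add: matrix_vector_mult_diff_rdistrib outer_mult inner_diff_right power2_eq_square inner_commute)
  qed
  have "0 \<le> inner Y (mat 1 - outer u)" by (rule psd_inner_nonneg[OF Y p2])
  hence h2: "l \<le> trace Y" using lu by (simp add: inner_diff_right inner_outer inner_mat1)
  have "inner Y Y \<le> (trace Y)^2"
    using h1 h2 l0 by (metis mult_right_mono order_trans power2_eq_square psd_trace_nonneg Y)
  thus ?thesis using psd_trace_nonneg[OF Y] by (simp add: norm_le_square)
qed

lemma matrix_add_rdistrib': "((A::real^'m^'n) + B) ** C = A ** C + B ** C"
  by (simp add: matrix_matrix_mult_def vec_eq_iff sum.distrib distrib_right)

lemma mult_scaleR_mid: "(P :: real^'r^'n) ** (c *\<^sub>R S) ** Q = c *\<^sub>R (P ** S ** Q)"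
  by (simp add: matrix_scalar_ac scalar_matrix_assoc)

lemma PSP_props:
  fixes P :: "real^'r^'n" and S :: "real^'r^'r"
  assumes Pt: "transpose P ** P = mat 1" and S: "psd S"
  shows "psd (P ** S ** transpose P)" "trace (P ** S ** transpose P) = trace S"
proof -
  have sS: "transpose S = S" using S by (simp add: psd_def sym_mat_def)
  have "transpose (P ** S ** transpose P) = P ** S ** transpose P"
    by (simp add: matrix_transpose_mul sS matrix_mul_assoc)
  moreover have "0 \<le> v \<bullet> ((P ** S ** transpose P) *v v)" for v
  proof -
    have "(P ** S ** transpose P) *v v = P *v (S *v (transpose P *v v))"
      by (simp only: matrix_vector_mul_assoc matrix_mul_assoc)
    hence "v \<bullet> ((P ** S ** transpose P) *v v) = (transpose P *v v) \<bullet> (S *v (transpose P *v v))"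
      by (simp add: dot_lmul_matrix[symmetric])
    thus ?thesis using S by (simp add: psd_def)
  qed
  ultimately show "psd (P ** S ** transpose P)" by (simp add: psd_def sym_mat_def)
  have "trace (P ** S ** transpose P) = trace (transpose P ** (P ** S))"
    by (rule trace_mul_sym)
  also have "\<dots> = trace S" by (simp add: matrix_mul_assoc Pt)
  finally show "trace (P ** S ** transpose P) = trace S" .
qed

lemma What_props:
  assumes Wb: "psd Wb" "trace Wb = 1" and Pt: "transpose P ** P = mat 1"
    and W: "W \<in> What \<rho> Wb P"
  shows "psd W" "trace W \<le> \<rho>"
proof -
  obtain \<gamma> S where W': "W = \<gamma> *\<^sub>R Wb + P ** S ** transpose P" "psd S" "\<gamma> \<ge> 0" "\<gamma> + trace S \<le> \<rho>"
    using W unfolding What_def by blast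
  show "psd W" using W' PSP_props[OF Pt W'(2)] Wb by auto
  show "trace W \<le> \<rho>" using W' PSP_props[OF Pt W'(2)] Wb by (simp add: trace_add trace_scaleR)
qed

lemma What_zero: "\<rho> \<ge> 0 \<Longrightarrow> 0 \<in> What \<rho> Wb P"
  unfolding What_def by (rule CollectI, rule exI[of _ 0], rule exI[of _ 0]) (simp add: trace_0[simplified] psd_zero)

lemma What_convex:
  assumes W1: "W1 \<in> What \<rho> Wb P" and W2: "W2 \<in> What \<rho> Wb P" and s: "0 \<le> s" "s \<le> 1"
  shows "W1 + s *\<^sub>R (W2 - W1) \<in> What \<rho> Wb P"
proof -
  obtain g1 S1 where a: "W1 = g1 *\<^sub>R Wb + P ** S1 ** transpose P" "psd S1" "g1 \<ge> 0" "g1 + trace S1 \<le> \<rho>"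
    using W1 unfolding What_def by blast
  obtain g2 S2 where b: "W2 = g2 *\<^sub>R Wb + P ** S2 ** transpose P" "psd S2" "g2 \<ge> 0" "g2 + trace S2 \<le> \<rho>"
    using W2 unfolding What_def by blast
  define g where "g = (1-s)*g1 + s*g2"
  define S where "S = (1-s) *\<^sub>R S1 + s *\<^sub>R S2"
  have "W1 + s *\<^sub>R (W2 - W1) = (1-s) *\<^sub>R W1 + s *\<^sub>R W2" by (simp add: algebra_simps)
  also have "\<dots> = g *\<^sub>R Wb + P ** S ** transpose P"
  proof -
    have PS: "P ** S ** transpose P = (1-s) *\<^sub>R (P ** S1 ** transpose P) + s *\<^sub>R (P ** S2 ** transpose P)"
      unfolding S_def by (simp only: matrix_add_ldistrib matrix_add_rdistrib' mult_scaleR_mid)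
    show ?thesis unfolding PS a(1) b(1) g_def by (simp add: algebra_simps)
  qed
  finally have eq: "W1 + s *\<^sub>R (W2 - W1) = g *\<^sub>R Wb + P ** S ** transpose P" .
  have "psd S" unfolding S_def using a(2) b(2) s by (intro psd_add psd_scaleR) auto
  moreover have "g \<ge> 0" using a b s by (simp add: g_def)
  moreover have "g + trace S \<le> \<rho>"
  proof -
    have "g + trace S = (1-s)*(g1 + trace S1) + s*(g2 + trace S2)"
      unfolding g_def S_def trace_add trace_scaleR by (simp add: algebra_simps)
    also have "\<dots> \<le> (1-s)*\<rho> + s*\<rho>"
      using a b s by (intro add_mono mult_left_mono) auto
    finally show ?thesis by (simp add: algebra_simps)
  qed
  ultimately show ?thesis unfolding eq What_def by blast
qed

lemma frobC: assumes "sym_mat C" shows "frob C X = inner C X"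
  using frob_comm[of C X] frob_sym[OF assms, of X] by (simp add: inner_commute)

context
  fixes A :: "'m::finite \<Rightarrow> real^'n^'n"
  assumes symA: "\<forall>i. sym_mat (A i)"
begin

lemma opA_nth: "opA A X $ i = inner (A i) X"
  using symA by (simp add: opA_def frobC)

lemma opA_add: "opA A (X + Y) = opA A X + opA A Y"
  and opA_diff: "opA A (X - Y) = opA A X - opA A Y"
  and opA_scaleR: "opA A (c *\<^sub>R X) = c *\<^sub>R opA A X"
  and opA_zero: "opA A 0 = 0"
  by (simp_all add: vec_eq_iff opA_nth inner_add_right inner_diff_right)

lemma adj_inner: "inner (opAadj A y) X = y \<bullet> opA A X"
proof -
  have "inner (opAadj A y) X = (\<Sum>i\<in>UNIV. y$i * inner (A i) X)"
    by (simp add: opAadj_def inner_sum_left)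
  also have "\<dots> = y \<bullet> opA A X" unfolding inner_vec_def[of y "opA A X"] by (simp add: opA_nth)
  finally show ?thesis .
qed

lemma adj_add: "opAadj A (y + z) = opAadj A y + opAadj A z"
  and adj_diff: "opAadj A (y - z) = opAadj A y - opAadj A z"
  and adj_scaleR: "opAadj A (c *\<^sub>R y) = c *\<^sub>R opAadj A y"
  by (simp_all add: opAadj_def scaleR_add_left scaleR_diff_left sum.distrib sum_subtractf scaleR_sum_right)

lemma adj_axis: "opAadj A (axis i 1) = A i"
proof -
  have "opAadj A (axis i 1) = (\<Sum>j\<in>UNIV. if j = i then A j else 0)"
    unfolding opAadj_def by (rule sum.cong) (auto simp: axis_def)
  thus ?thesis by simp
qed

lemma sym_adj: "sym_mat (opAadj A y)"
  unfolding opAadj_def using symA by (intro sym_mat_sum) auto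

end

lemma sym_bound:
  fixes D :: "real^'n^'n"
  assumes "sym_mat D"
  shows "\<exists>K\<ge>0. \<forall>w. \<bar>w \<bullet> (D *v w)\<bar> \<le> K * (w \<bullet> w)"
proof -
  define K where "K = \<bar>lambda_max D\<bar> + \<bar>lambda_max (-D)\<bar>"
  have "\<bar>w \<bullet> (D *v w)\<bar> \<le> K * (w \<bullet> w)" for w
  proof -
    have a: "w \<bullet> (D *v w) \<le> lambda_max D * (w \<bullet> w)" using lmax_props(3)[OF assms] by blast
    have b: "w \<bullet> ((-D) *v w) \<le> lambda_max (-D) * (w \<bullet> w)" using lmax_props(3)[of "-D"] assms by blast
    have ww: "w \<bullet> w \<ge> 0" by simp
    have "lambda_max D * (w \<bullet> w) \<le> K * (w \<bullet> w)"
      by (rule mult_right_mono[OF _ ww]) (simp add: K_def)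
    moreover have "lambda_max (-D) * (w \<bullet> w) \<le> K * (w \<bullet> w)"
      by (rule mult_right_mono[OF _ ww]) (simp add: K_def)
    ultimately show ?thesis using a b by (simp add: neg_mult abs_le_iff)
  qed
  moreover have "K \<ge> 0" by (simp add: K_def)
  ultimately show ?thesis by blast
qed

lemma strong_duality:
  fixes A :: "'m::finite \<Rightarrow> real^'n^'n"
  assumes symA: "\<forall>i. sym_mat (A i)" and symC: "sym_mat C"
    and A1: "assumption1 A" and A2: "assumption2 A b C"
    and Xs: "Xstar \<in> primal_opt A b C"
  shows "\<exists>y Z. psd Z \<and> Z + opAadj A y = C \<and> b \<bullet> y = inner C Xstar \<and> trace Z \<le> DZstar A b C"
proof -
  define p where "p = inner C Xstar"
  have Xsf: "psd Xstar" "opA A Xstar = b" using Xs by (auto simp: primal_opt_def primal_feas_def)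
  have popt: "p \<le> inner C X" if "psd X" "opA A X = b" for X
    using Xs that by (auto simp: primal_opt_def primal_feas_def p_def frobC[OF symC])
  obtain Xh where Xh: "opA A Xh = b" "pd Xh" using A2 by (auto simp: assumption2_def)
  obtain mu where mu: "mu > 0" "\<forall>v. mu * (v \<bullet> v) \<le> v \<bullet> (Xh *v v)" using pd_bound[OF Xh(2)] by blast
  have sXh: "sym_mat Xh" using Xh(2) by (simp add: pd_def)
  define K1 where "K1 = {z :: (real^'m) \<times> real. \<exists>X t. psd X \<and> inner C X - p \<le> t \<and> z = (opA A X - b, t)}"
  define K2 where "K2 = (\<lambda>t. (0::real^'m, t)) ` {..<(0::real)}"
  have cK2: "convex K2" unfolding K2_def
    by (rule convex_linear_image) (auto intro: linearI simp: convex_real_interval)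
  have cK1: "convex K1" unfolding convex_def
  proof (intro ballI allI impI)
    fix x y and u v :: real
    assume "x \<in> K1" "y \<in> K1" and uv: "0 \<le> u" "0 \<le> v" "u + v = 1"
    then obtain X1 t1 X2 t2 where a: "psd X1" "inner C X1 - p \<le> t1" "x = (opA A X1 - b, t1)"
      and c: "psd X2" "inner C X2 - p \<le> t2" "y = (opA A X2 - b, t2)"
      unfolding K1_def by blast
    define X where "X = u *\<^sub>R X1 + v *\<^sub>R X2"
    have "psd X" unfolding X_def using a c uv by (intro psd_add psd_scaleR) auto
    moreover have "inner C X - p \<le> u * t1 + v * t2"
    proof -
      have "inner C X - p = u * (inner C X1 - p) + v * (inner C X2 - p)"
        using uv by (simp add: X_def inner_add_right algebra_simps) (metis distrib_left mult_1_right)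
      also have "\<dots> \<le> u * t1 + v * t2" using a c uv by (intro add_mono mult_left_mono) auto
      finally show ?thesis .
    qed
    moreover have "u *\<^sub>R x + v *\<^sub>R y = (opA A X - b, u * t1 + v * t2)"
    proof -
      have "opA A X - b = u *\<^sub>R (opA A X1 - b) + v *\<^sub>R (opA A X2 - b)"
        using uv symA by (simp add: X_def opA_add opA_scaleR algebra_simps flip: scaleR_add_left)
      thus ?thesis using a c by simp
    qed
    ultimately show "u *\<^sub>R x + v *\<^sub>R y \<in> K1" unfolding K1_def by blast
  qed
  have ne1: "K1 \<noteq> {}" unfolding K1_def using Xsf(1) by blast
  have ne2: "K2 \<noteq> {}" unfolding K2_def by auto
  have disj: "K2 \<inter> K1 = {}"
  proof (rule ccontr)
    assume "K2 \<inter> K1 \<noteq> {}"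
    then obtain z where z: "z \<in> K2" "z \<in> K1" by blast
    from z(1) obtain t where t: "t < 0" "z = (0, t)" unfolding K2_def by auto
    from z(2) obtain X t' where X: "psd X" "inner C X - p \<le> t'" "z = (opA A X - b, t')"
      unfolding K1_def by blast
    have "opA A X = b" "t' = t" using t(2) X(3) by auto
    moreover have "p \<le> inner C X" using popt X(1) calculation(1) by simp
    ultimately show False using t(1) X(2) by simp
  qed
  obtain a c where ac: "a \<noteq> 0" "\<forall>x\<in>K2. inner a x \<le> c" "\<forall>x\<in>K1. inner a x \<ge> c"
    using separating_hyperplane_sets[OF cK2 cK1 ne2 ne1 disj] by blast
  obtain a1 a0 where a: "a = (a1, a0)" by (cases a)
  have h2: "a0 * t \<le> c" if "t < 0" for t
    using ac(2) that unfolding K2_def a by auto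
  have h1: "a1 \<bullet> (opA A X - b) + a0 * (inner C X - p) \<ge> c" if "psd X" for X
    using ac(3) that unfolding K1_def a by fastforce
  have a0: "a0 \<ge> 0"
  proof (rule ccontr)
    assume "\<not> a0 \<ge> 0"
    hence "(\<bar>c\<bar> + 1) / a0 < 0" by (simp add: divide_pos_neg)
    from h2[OF this] show False using \<open>\<not> a0 \<ge> 0\<close> by simp
  qed
  have c0: "c \<ge> 0"
  proof (rule ccontr)
    assume cn: "\<not> c \<ge> 0"
    show False
    proof (cases "a0 = 0")
      case True thus False using h2[of "-1"] cn by simp
    next
      case False
      hence "a0 > 0" using a0 by simp
      hence "c / (2*a0) < 0" using cn by (simp add: divide_neg_pos)
      from h2[OF this] show False using \<open>a0 > 0\<close> cn by simp
    qed
  qed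
  have a0p: "a0 > 0"
  proof (rule ccontr)
    assume "\<not> a0 > 0"
    hence a00: "a0 = 0" using a0 by simp
    define D where "D = opAadj A a1"
    have sD: "sym_mat D" unfolding D_def by (rule sym_adj[OF symA])
    obtain K where K: "K \<ge> 0" "\<forall>w. \<bar>w \<bullet> (D *v w)\<bar> \<le> K * (w \<bullet> w)" using sym_bound[OF sD] by blast
    define s where "s = mu / (K + 1)"
    have s0: "s > 0" using mu K by (simp add: s_def)
    have sK: "s * K \<le> mu" using mu K by (simp add: s_def field_simps)
    have "psd (Xh - s *\<^sub>R D)"
      unfolding psd_def
    proof (intro conjI allI)
      show "sym_mat (Xh - s *\<^sub>R D)" using sXh sD by auto
      fix w :: "real^'n"
      have "s * (w \<bullet> (D *v w)) \<le> s * (K * (w \<bullet> w))"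
        using K(2)[rule_format, of w] s0 by (intro mult_left_mono) (auto simp: abs_le_iff)
      also have "\<dots> \<le> mu * (w \<bullet> w)" using sK by (simp add: mult.assoc[symmetric] mult_right_mono)
      also have "\<dots> \<le> w \<bullet> (Xh *v w)" using mu by blast
      finally show "0 \<le> w \<bullet> ((Xh - s *\<^sub>R D) *v w)"
        by (simp add: matrix_vector_mult_diff_rdistrib scaleR_matrix_vector_assoc[symmetric] inner_diff_right)
    qed
    from h1[OF this] have "a1 \<bullet> (opA A (Xh - s *\<^sub>R D) - b) \<ge> 0" using a00 c0 by simp
    moreover have "a1 \<bullet> (opA A (Xh - s *\<^sub>R D) - b) = - s * inner D D"
      using Xh(1) symA by (simp add: opA_diff opA_scaleR adj_inner[OF symA, symmetric] D_def)
    ultimately have "inner D D \<le> 0" using s0 by (simp add: mult_le_0_iff)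
    hence "D = 0" by (metis inner_gt_zero_iff not_le)
    hence "a1 = 0" using A1 by (simp add: assumption1_def D_def)
    thus False using ac(1) a a00 by (simp add: zero_prod_def)
  qed
  define y where "y = (- 1 / a0) *\<^sub>R a1"
  define Z where "Z = C - opAadj A y"
  have key: "inner Z X + (y \<bullet> b - p) \<ge> 0" if "psd X" for X
  proof -
    have "0 \<le> a1 \<bullet> (opA A X - b) + a0 * (inner C X - p)" using h1[OF that] c0 by simp
    hence "0 \<le> (a1 \<bullet> (opA A X - b) + a0 * (inner C X - p)) / a0" using a0p by simp
    also have "\<dots> = inner Z X + (y \<bullet> b - p)"
      using a0p by (simp add: Z_def y_def inner_diff_left adj_inner[OF symA] inner_diff_right field_simps)
    finally show ?thesis .
  qed
  have yb: "y \<bullet> b \<ge> p" using key[OF psd_zero] by simp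
  have sZ: "sym_mat Z" unfolding Z_def using symC sym_adj[OF symA] by auto
  have pZ: "psd Z"
    unfolding psd_def
  proof (intro conjI allI)
    show "sym_mat Z" by (rule sZ)
    fix v :: "real^'n"
    show "0 \<le> v \<bullet> (Z *v v)"
    proof (rule ccontr)
      assume neg: "\<not> 0 \<le> v \<bullet> (Z *v v)"
      define s where "s = (\<bar>y \<bullet> b - p\<bar> + 1) / (- (v \<bullet> (Z *v v)))"
      have s0: "s > 0" unfolding s_def using neg by (intro divide_pos_pos) auto
      have "0 \<le> inner Z (s *\<^sub>R outer v) + (y \<bullet> b - p)"
        using key[OF psd_scaleR[OF psd_outer]] s0 by simp
      also have "inner Z (s *\<^sub>R outer v) = - (\<bar>y \<bullet> b - p\<bar> + 1)"
        using neg by (simp add: inner_outer s_def)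
      finally show False by simp
    qed
  qed
  have weak: "b \<bullet> y' \<le> p" if "psd Z'" "Z' + opAadj A y' = C" for y' Z'
  proof -
    have "b \<bullet> y' = inner (opAadj A y') Xstar" unfolding adj_inner[OF symA] Xsf(2) by (rule inner_commute)
    also have "\<dots> = p - inner Z' Xstar" using that(2) unfolding p_def
      by (metis add_diff_cancel_left' inner_diff_left)
    also have "\<dots> \<le> p" using psd_inner_nonneg[OF that(1) Xsf(1)] by simp
    finally show ?thesis .
  qed
  have Zy: "Z + opAadj A y = C" by (simp add: Z_def)
  have byp: "b \<bullet> y = p" using weak[OF pZ Zy] yb by (simp add: inner_commute)
  have opt: "(y, Z) \<in> dual_opt A b C"
    unfolding dual_opt_def dual_feas_def using pZ Zy weak byp by auto
  have bdd: "bdd_above ((\<lambda>(y, Z). trace Z) ` dual_opt A b C)"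
  proof (rule bdd_aboveI2)
    fix yz assume "yz \<in> dual_opt A b C"
    then obtain y' Z' where yz: "yz = (y', Z')" "psd Z'" "Z' + opAadj A y' = C" "b \<bullet> y \<le> b \<bullet> y'"
      unfolding dual_opt_def dual_feas_def using pZ Zy by fastforce
    have pX: "psd (Xh - mu *\<^sub>R mat 1)"
      unfolding psd_def using sXh mu by (auto simp: matrix_vector_mult_diff_rdistrib mat_scale_mult inner_diff_right)
    have "0 \<le> inner Z' (Xh - mu *\<^sub>R mat 1)" by (rule psd_inner_nonneg[OF yz(2) pX])
    hence "mu * trace Z' \<le> inner Z' Xh" by (simp add: inner_diff_right inner_mat1)
    also have "inner Z' Xh = inner C Xh - b \<bullet> y'" using yz(3) Xh(1)
      by (metis add_diff_cancel_right' adj_inner[OF symA] inner_diff_left inner_commute)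
    also have "\<dots> \<le> inner C Xh - p" using yz(4) byp by simp
    finally have "mu * trace Z' \<le> inner C Xh - p" .
    hence "trace Z' \<le> (inner C Xh - p) / mu" using mu by (simp add: field_simps)
    thus "(case yz of (y, Z) \<Rightarrow> trace Z) \<le> (inner C Xh - p) / mu" using yz by simp
  qed
  have "trace Z \<le> DZstar A b C" unfolding DZstar_def
    by (rule cSup_upper[OF _ bdd]) (use opt in force)
  thus ?thesis using pZ Zy byp p_def by blast
qed

lemma Fpen_eq: "sym_mat C \<Longrightarrow> Fpen C \<rho> X = inner C X + \<rho> * mneg X"
  by (simp add: Fpen_def mneg_def frobC)

lemma inner_bound_W:
  fixes W X :: "real^'n^'n"
  assumes "psd W" "trace W \<le> \<rho>" "sym_mat X"
  shows "inner W (-X) \<le> \<rho> * mneg X"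
proof -
  have "0 \<le> inner W (X + mneg X *\<^sub>R mat 1)" by (rule psd_inner_nonneg[OF assms(1) psd_shift[OF assms(3)]])
  hence "- inner W X \<le> mneg X * trace W" by (simp add: inner_add_right inner_mat1)
  also have "\<dots> \<le> mneg X * \<rho>" using assms(2) mneg_nonneg by (intro mult_left_mono) auto
  finally show ?thesis by (simp add: mult.commute)
qed

lemma exact_penalty:
  fixes A :: "'m::finite \<Rightarrow> real^'n^'n"
  assumes symA: "\<forall>i. sym_mat (A i)" and symC: "sym_mat C"
    and Z: "psd Z" "Z + opAadj A y = C" "b \<bullet> y = p" "trace Z \<le> DZ"
    and rho: "\<rho> > 2 * DZ + 1"
    and X: "X \<in> X0 A b"
  shows "Fpen C \<rho> X \<ge> p + (DZ + 1) * mneg X"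
proof -
  have sX: "sym_mat X" "opA A X = b" using X by (auto simp: X0_def)
  have "0 \<le> inner Z (X + mneg X *\<^sub>R mat 1)" by (rule psd_inner_nonneg[OF Z(1) psd_shift[OF sX(1)]])
  hence "- inner Z X \<le> mneg X * trace Z" by (simp add: inner_add_right inner_mat1)
  also have "\<dots> \<le> mneg X * DZ" using Z(4) mneg_nonneg by (intro mult_left_mono) auto
  finally have h: "- inner Z X \<le> mneg X * DZ" .
  have "inner C X = inner Z X + p"
    using Z(2,3) sX(2) by (metis adj_inner[OF symA] inner_add_left inner_commute)
  hence "Fpen C \<rho> X = inner Z X + p + \<rho> * mneg X" by (simp add: Fpen_eq[OF symC])
  moreover have "(DZ + 1) * mneg X \<le> (\<rho> - DZ) * mneg X"
    using rho mneg_nonneg[of X] by (intro mult_right_mono) auto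
  ultimately show ?thesis using h by (simp add: algebra_simps)
qed

lemma level_bdd:
  fixes A :: "'m::finite \<Rightarrow> real^'n^'n"
  assumes symA: "\<forall>i. sym_mat (A i)" and symC: "sym_mat C"
    and A2: "assumption2 A b C"
    and Z: "psd Z" "Z + opAadj A y = C" "b \<bullet> y = p" "trace Z \<le> DZ" "DZ \<ge> 0"
    and rho: "\<rho> > 2 * DZ + 1"
  shows "bdd_above (fnorm ` {X \<in> X0 A b. Fpen C \<rho> X \<le> Fpen C \<rho> \<Omega>0})"
proof -
  obtain yh Zh where Zh: "Zh + opAadj A yh = C" "pd Zh" using A2 by (auto simp: assumption2_def)
  obtain mu where mu: "mu > 0" "\<forall>v. mu * (v \<bullet> v) \<le> v \<bullet> (Zh *v v)" using pd_bound[OF Zh(2)] by blast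
  have sZh: "sym_mat Zh" using Zh(2) by (simp add: pd_def)
  have pZh: "psd Zh" unfolding psd_def
  proof (intro conjI allI)
    show "sym_mat Zh" by (rule sZh)
    fix v :: "real^'n"
    show "0 \<le> v \<bullet> (Zh *v v)"
    proof (cases "v = 0")
      case False thus ?thesis using Zh(2) unfolding pd_def by (simp add: less_imp_le)
    qed simp
  qed
  define F0 where "F0 = Fpen C \<rho> \<Omega>0"
  define M where "M = (F0 - p) / (DZ + 1)"
  define R where "R = F0 - yh \<bullet> b + M * trace Zh"
  have pX: "psd (Zh - mu *\<^sub>R mat 1)"
    unfolding psd_def using sZh mu by (auto simp: matrix_vector_mult_diff_rdistrib mat_scale_mult inner_diff_right)
  show ?thesis
  proof (rule bdd_aboveI2)
    fix X assume "X \<in> {X \<in> X0 A b. Fpen C \<rho> X \<le> Fpen C \<rho> \<Omega>0}"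
    hence X: "X \<in> X0 A b" "Fpen C \<rho> X \<le> F0" by (auto simp: F0_def)
    have sX: "sym_mat X" "opA A X = b" using X by (auto simp: X0_def)
    define m where "m = mneg X"
    have m0: "m \<ge> 0" by (simp add: m_def mneg_nonneg)
    have "p + (DZ + 1) * m \<le> F0" using exact_penalty[OF symA symC Z(1-4) rho X(1)] X(2) by (simp add: m_def)
    hence mM: "m \<le> M" using Z(5) by (simp add: M_def field_simps)
    define Y where "Y = X + m *\<^sub>R mat 1"
    have pY: "psd Y" unfolding Y_def m_def by (rule psd_shift[OF sX(1)])
    have "0 \<le> inner (Zh - mu *\<^sub>R mat 1) Y" by (rule psd_inner_nonneg[OF pX pY])
    hence "mu * trace Y \<le> inner Zh Y" by (simp add: inner_diff_left trace_inner)
    also have "inner Zh Y = inner C X - yh \<bullet> b + m * trace Zh"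
    proof -
      have ab: "inner (opAadj A yh) X = yh \<bullet> b" using adj_inner[OF symA] sX(2) by simp
      have "Zh = C - opAadj A yh" using Zh(1) by (simp add: eq_diff_eq)
      hence "inner Zh X = inner C X - yh \<bullet> b" using ab by (simp add: inner_diff_left)
      thus ?thesis unfolding Y_def by (simp add: inner_add_right inner_mat1)
    qed
    also have "\<dots> \<le> R"
    proof -
      have "inner C X \<le> F0" using X(2) rho Z(5) m0 by (simp add: Fpen_eq[OF symC] m_def[symmetric])
        (smt (verit) mult_nonneg_nonneg)
      moreover have "m * trace Zh \<le> M * trace Zh"
        using mM psd_trace_nonneg[OF pZh] by (intro mult_right_mono) auto
      ultimately show ?thesis by (simp add: R_def)
    qed
    finally have tY: "trace Y \<le> R / mu" using mu by (simp add: field_simps)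
    have "fnorm X = norm (Y - m *\<^sub>R mat 1)" by (simp add: fnorm_norm Y_def)
    also have "\<dots> \<le> norm Y + norm (m *\<^sub>R (mat 1 :: real^'n^'n))" by (rule norm_triangle_ineq4)
    also have "\<dots> \<le> R / mu + M * norm (mat 1 :: real^'n^'n)"
    proof -
      have "m * norm (mat 1 :: real^'n^'n) \<le> M * norm (mat 1 :: real^'n^'n)"
        using mM by (intro mult_right_mono) auto
      thus ?thesis using psd_trace_norm[OF pY] tY m0 by simp
    qed
    finally show "fnorm X \<le> R / mu + M * norm (mat 1 :: real^'n^'n)" .
  qed
qed

theorem lemma4p4:
  fixes A :: "'m::finite \<Rightarrow> real^'n^'n" and b :: "real^'m" and C :: "real^'n^'n"
    and \<rho> \<alpha> \<beta> :: real
    and \<Omega>0 \<Omega>t Wb Wstar Xstar :: "real^'n^'n" and P :: "real^'r^'n" and ystar :: "real^'m"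
  assumes symA: "\<forall>i. sym_mat (A i)" and symC: "sym_mat C"
    and A1: "assumption1 A" and A2: "assumption2 A b C"
    and rho: "\<rho> > 2 * DZstar A b C + 1" and alpha: "\<alpha> > 0" and beta: "0 < \<beta>" "\<beta> < 1"
    and O0: "\<Omega>0 \<in> X0 A b" and Ot: "\<Omega>t \<in> X0 A b"
    and Fle: "Fpen C \<rho> \<Omega>t \<le> Fpen C \<rho> \<Omega>0"
    and Wb: "psd Wb" "trace Wb = 1"
    and Pt: "transpose P ** P = mat 1"
    and Wmem: "Wstar \<in> What \<rho> Wb P"
    and minim: "\<forall>W \<in> What \<rho> Wb P. \<forall>y. subobj A b C \<alpha> \<Omega>t Wstar ystar \<le> subobj A b C \<alpha> \<Omega>t W y"
    and descent: "\<beta> * (Fpen C \<rho> \<Omega>t - Fhat C \<rho> Wb P (\<Omega>t + (1/\<alpha>) *\<^sub>R (Wstar - C + opAadj A ystar)))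
        \<le> Fpen C \<rho> \<Omega>t - Fpen C \<rho> (\<Omega>t + (1/\<alpha>) *\<^sub>R (Wstar - C + opAadj A ystar))"
    and Xs: "Xstar \<in> primal_opt A b C"
  shows "let \<Omega>1 = \<Omega>t + (1/\<alpha>) *\<^sub>R (Wstar - C + opAadj A ystar);
             e = Fpen C \<rho> \<Omega>t - Fpen C \<rho> Xstar;
             DZ = DZstar A b C;
             DO = DOmega A b C \<rho> \<Omega>0
         in (opA A \<Omega>1 = b \<and> lambda_min \<Omega>1 \<ge> - e / (DZ + 1))
          \<and> (psd Wstar \<and> (fnorm (Wstar - C + opAadj A ystar))^2 \<le> (2 * \<alpha> / \<beta>) * e)
          \<and> (- (\<rho> * e) / (DZ + 1) - DO * sqrt ((2 * \<alpha> / \<beta>) * e) \<le> frob C \<Omega>1 - b \<bullet> ystar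
             \<and> frob C \<Omega>1 - b \<bullet> ystar \<le> ((1 - \<beta>) / \<beta>) * e + DO * sqrt ((2 * \<alpha> / \<beta>) * e))"
proof -
  define G where "G = Wstar - C + opAadj A ystar"
  define \<Omega>1 where "\<Omega>1 = \<Omega>t + (1/\<alpha>) *\<^sub>R G"
  define p where "p = inner C Xstar"
  define DZ where "DZ = DZstar A b C"
  define DO where "DO = DOmega A b C \<rho> \<Omega>0"
  define e where "e = Fpen C \<rho> \<Omega>t - Fpen C \<rho> Xstar"
  obtain y0 Z0 where Z0: "psd Z0" "Z0 + opAadj A y0 = C" "b \<bullet> y0 = p" "trace Z0 \<le> DZ"
    using strong_duality[OF symA symC A1 A2 Xs] unfolding p_def DZ_def by blast
  have DZ0: "DZ \<ge> 0" using psd_trace_nonneg[OF Z0(1)] Z0(4) by linarith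
  have rho': "\<rho> > 2 * DZ + 1" using rho by (simp add: DZ_def)
  have rho0: "\<rho> > 0" using rho' DZ0 by linarith
  have Xsf: "psd Xstar" "opA A Xstar = b" using Xs by (auto simp: primal_opt_def primal_feas_def)
  have sXs: "sym_mat Xstar" using Xsf(1) by (simp add: psd_def)
  have EP: "Fpen C \<rho> X \<ge> p + (DZ + 1) * mneg X" if "X \<in> X0 A b" for X
    by (rule exact_penalty[OF symA symC Z0 rho' that])
  have sOt: "sym_mat \<Omega>t" "opA A \<Omega>t = b" using Ot by (auto simp: X0_def)
  have pW: "psd Wstar" "trace Wstar \<le> \<rho>" using What_props[OF Wb Pt Wmem] by auto
  have sG: "sym_mat G" unfolding G_def using pW(1) symC sym_adj[OF symA]
    by (intro sym_mat_add sym_mat_diff) (auto simp: psd_def)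
  have sO1: "sym_mat \<Omega>1" unfolding \<Omega>1_def using sOt(1) sG by auto
  have sub_eq: "subobj A b C \<alpha> \<Omega>t W y = inner (W - C) \<Omega>t + (1 / (2 * \<alpha>)) * (norm (W - C + opAadj A y))^2" for W y
    by (simp add: subobj_def sOt(2) frob_sym[OF sOt(1)] fnorm_norm)
  \<comment> \<open>optimality in y\<close>
  have AG: "opA A G = 0"
  proof -
    have "inner G (A i) = 0" for i
    proof -
      have "\<forall>t. 0 \<le> 2*t*(inner G (A i)) + t^2*(inner (A i) (A i))"
      proof
        fix t :: real
        have "subobj A b C \<alpha> \<Omega>t Wstar ystar \<le> subobj A b C \<alpha> \<Omega>t Wstar (ystar + t *\<^sub>R axis i 1)"
          using minim Wmem by blast
        hence "(1 / (2 * \<alpha>)) * (norm G)^2 \<le> (1 / (2 * \<alpha>)) * (norm (G + t *\<^sub>R A i))^2"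
          by (simp add: sub_eq G_def adj_add[OF symA] adj_scaleR[OF symA] adj_axis[OF symA] algebra_simps)
        hence "(norm G)^2 \<le> (norm (G + t *\<^sub>R A i))^2"
          using alpha by (subst (asm) mult_le_cancel_left_pos) auto
        thus "0 \<le> 2*t*(inner G (A i)) + t^2*(inner (A i) (A i))"
          unfolding power2_norm_eq_inner by (simp add: inner_add_left inner_add_right inner_commute power2_eq_square algebra_simps)
      qed
      thus ?thesis by (rule quad_zero_aux[rotated]) simp
    qed
    thus ?thesis by (simp add: vec_eq_iff opA_nth[OF symA] inner_commute)
  qed
  have AO1: "opA A \<Omega>1 = b" by (simp add: \<Omega>1_def opA_add[OF symA] opA_scaleR[OF symA] AG sOt(2))
  have O1X0: "\<Omega>1 \<in> X0 A b" using sO1 AO1 by (simp add: X0_def)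
  \<comment> \<open>optimality in W\<close>
  have optW: "inner (W - Wstar) \<Omega>1 \<ge> 0" if W: "W \<in> What \<rho> Wb P" for W
  proof -
    define D where "D = W - Wstar"
    have "\<forall>s. 0 < s \<and> s \<le> 1 \<longrightarrow> 0 \<le> s * (inner D \<Omega>t + (1/\<alpha>) * inner G D) + s^2 * (inner D D / (2*\<alpha>))"
    proof (intro allI impI)
      fix s :: real assume s: "0 < s \<and> s \<le> 1"
      have Ws: "Wstar + s *\<^sub>R (W - Wstar) \<in> What \<rho> Wb P" using What_convex[OF Wmem W] s by auto
      have "subobj A b C \<alpha> \<Omega>t Wstar ystar \<le> subobj A b C \<alpha> \<Omega>t (Wstar + s *\<^sub>R D) ystar"
        using minim Ws unfolding D_def by blast
      hence "inner (Wstar - C) \<Omega>t + (1 / (2 * \<alpha>)) * (norm G)^2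
          \<le> inner (Wstar - C) \<Omega>t + s * inner D \<Omega>t + (1 / (2 * \<alpha>)) * (norm (G + s *\<^sub>R D))^2"
        by (simp add: sub_eq G_def algebra_simps inner_add_left)
      hence "0 \<le> s * inner D \<Omega>t + (1 / (2 * \<alpha>)) * ((norm (G + s *\<^sub>R D))^2 - (norm G)^2)"
        by (simp add: algebra_simps)
      also have "(norm (G + s *\<^sub>R D))^2 - (norm G)^2 = 2 * s * inner G D + s^2 * inner D D"
        unfolding power2_norm_eq_inner by (simp add: inner_add_left inner_add_right inner_commute power2_eq_square algebra_simps)
      finally show "0 \<le> s * (inner D \<Omega>t + (1/\<alpha>) * inner G D) + s^2 * (inner D D / (2*\<alpha>))"
        using alpha by (simp add: field_simps)
    qed
    hence "inner D \<Omega>t + (1/\<alpha>) * inner G D \<ge> 0"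
      by (rule quad_pos_aux[rotated]) (use alpha in simp)
    thus ?thesis by (simp add: D_def[symmetric] \<Omega>1_def inner_add_right inner_commute)
  qed
  have Fhat1: "Fhat C \<rho> Wb P \<Omega>1 = inner C \<Omega>1 - inner Wstar \<Omega>1"
  proof -
    have "Sup ((\<lambda>W. frob W (- \<Omega>1)) ` What \<rho> Wb P) = frob Wstar (- \<Omega>1)"
    proof (rule cSup_eq_maximum)
      show "frob Wstar (- \<Omega>1) \<in> (\<lambda>W. frob W (- \<Omega>1)) ` What \<rho> Wb P" using Wmem by blast
      fix x assume "x \<in> (\<lambda>W. frob W (- \<Omega>1)) ` What \<rho> Wb P"
      then obtain W where "W \<in> What \<rho> Wb P" "x = frob W (- \<Omega>1)" by blast
      thus "x \<le> frob Wstar (- \<Omega>1)" using optW[of W] sO1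
        by (simp add: frob_sym inner_diff_left sym_mat_uminus)
    qed
    thus ?thesis using sO1 by (simp add: Fhat_def frobC[OF symC] frob_sym sym_mat_uminus)
  qed
  have FOt: "Fpen C \<rho> \<Omega>t \<ge> inner C \<Omega>t - inner Wstar \<Omega>t"
    using inner_bound_W[OF pW sOt(1)] mneg_nonneg[of \<Omega>t] rho0
    by (simp add: Fpen_eq[OF symC])
  have GG: "inner (Wstar - C) G = inner G G"
  proof -
    have "Wstar - C = G - opAadj A ystar" by (simp add: G_def)
    moreover have "inner (opAadj A ystar) G = 0" by (simp add: adj_inner[OF symA] AG)
    ultimately show ?thesis by (simp add: inner_diff_left)
  qed
  have gap: "Fpen C \<rho> \<Omega>t - Fhat C \<rho> Wb P \<Omega>1 \<ge> inner G G / \<alpha>"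
  proof -
    have "inner C \<Omega>t - inner Wstar \<Omega>t - (inner C \<Omega>1 - inner Wstar \<Omega>1) = (1/\<alpha>) * inner (Wstar - C) G"
      by (simp add: \<Omega>1_def inner_add_right inner_diff_left algebra_simps)
    thus ?thesis using FOt Fhat1 GG by simp
  qed
  have GG0: "inner G G / \<alpha> \<ge> 0" using alpha by simp
  have desc: "Fpen C \<rho> \<Omega>t - Fpen C \<rho> \<Omega>1 \<ge> \<beta> * (inner G G / \<alpha>)"
  proof -
    have "\<beta> * (inner G G / \<alpha>) \<le> \<beta> * (Fpen C \<rho> \<Omega>t - Fhat C \<rho> Wb P \<Omega>1)"
      using gap beta by (intro mult_left_mono) auto
    also have "\<dots> \<le> Fpen C \<rho> \<Omega>t - Fpen C \<rho> \<Omega>1" using descent unfolding \<Omega>1_def G_def .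
    finally show ?thesis .
  qed
  have FXs: "Fpen C \<rho> Xstar = p" using psd_mneg[OF Xsf(1)] by (simp add: Fpen_eq[OF symC] p_def)
  have EP1: "Fpen C \<rho> \<Omega>1 \<ge> p + (DZ + 1) * mneg \<Omega>1" by (rule EP[OF O1X0])
  have m1: "(DZ + 1) * mneg \<Omega>1 \<ge> 0" using DZ0 mneg_nonneg[of \<Omega>1] by simp
  have bGG: "\<beta> * (inner G G / \<alpha>) \<ge> 0" using beta GG0 by (intro mult_nonneg_nonneg) auto
  have e_ge: "e \<ge> \<beta> * (inner G G / \<alpha>)" using desc EP1 m1 FXs by (simp add: e_def)
  have e0: "e \<ge> 0" using e_ge bGG by linarith
  have GGe: "inner G G \<le> (2 * \<alpha> / \<beta>) * e"
  proof -
    have "inner G G \<le> (\<alpha> / \<beta>) * e" using e_ge alpha beta by (simp add: field_simps)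
    also have "\<dots> \<le> (2 * \<alpha> / \<beta>) * e" using e0 alpha beta by (intro mult_right_mono) (auto simp: field_simps)
    finally show ?thesis .
  qed
  have mO1: "mneg \<Omega>1 \<le> e / (DZ + 1)"
  proof -
    have "(DZ + 1) * mneg \<Omega>1 \<le> e" using EP1 desc bGG FXs by (simp add: e_def)
    thus ?thesis using DZ0 by (simp add: field_simps)
  qed
  have c1: "lambda_min \<Omega>1 \<ge> - e / (DZ + 1)" using lmin_ge[OF sO1] mO1 by simp
  have FO1: "Fpen C \<rho> \<Omega>1 \<le> Fpen C \<rho> \<Omega>0" using desc bGG Fle by linarith
  have nO1: "norm \<Omega>1 \<le> DO"
  proof -
    have "fnorm \<Omega>1 \<le> DO" unfolding DO_def DOmega_def
      by (rule cSup_upper[OF _ level_bdd[OF symA symC A2 Z0 DZ0 rho']]) (use O1X0 FO1 in blast)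
    thus ?thesis by (simp add: fnorm_norm)
  qed
  have DO0: "DO \<ge> 0" using nO1 norm_ge_zero order_trans by blast
  have nG: "norm G \<le> sqrt ((2 * \<alpha> / \<beta>) * e)"
    using GGe by (simp add: norm_eq_sqrt_inner real_sqrt_le_mono)
  have ee: "0 \<le> 2 * \<alpha> * e / \<beta>" using alpha beta e0 by simp
  have cross: "\<bar>inner G \<Omega>1\<bar> \<le> DO * sqrt ((2 * \<alpha> / \<beta>) * e)"
  proof -
    have "\<bar>inner G \<Omega>1\<bar> \<le> norm G * norm \<Omega>1" by (rule Cauchy_Schwarz_ineq2)
    also have "\<dots> \<le> sqrt ((2 * \<alpha> / \<beta>) * e) * DO" using nG nO1 DO0 ee by (intro mult_mono) auto
    finally show ?thesis by (simp add: mult.commute)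
  qed
  have val: "frob C \<Omega>1 - b \<bullet> ystar = inner Wstar \<Omega>1 - inner G \<Omega>1"
  proof -
    have "b \<bullet> ystar = inner (opAadj A ystar) \<Omega>1" unfolding adj_inner[OF symA] AO1 by (rule inner_commute)
    moreover have "C = Wstar + opAadj A ystar - G" by (simp add: G_def)
    moreover have "frob C \<Omega>1 = inner C \<Omega>1" by (rule frobC[OF symC])
    ultimately show ?thesis by (simp add: inner_diff_left inner_add_left)
  qed
  have Wlow: "inner Wstar \<Omega>1 \<ge> - (\<rho> * e) / (DZ + 1)"
  proof -
    have "- inner Wstar \<Omega>1 \<le> \<rho> * mneg \<Omega>1" using inner_bound_W[OF pW sO1] by simp
    also have "\<dots> \<le> \<rho> * (e / (DZ + 1))" using mO1 rho0 by (intro mult_left_mono) auto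
    finally show ?thesis by simp
  qed
  have Wup: "inner Wstar \<Omega>1 \<le> 0" using optW[OF What_zero] rho0 by (simp add: inner_diff_left)
  have be: "((1 - \<beta>) / \<beta>) * e \<ge> 0" using beta e0 by simp
  have c3: "- (\<rho> * e) / (DZ + 1) - DO * sqrt ((2 * \<alpha> / \<beta>) * e) \<le> frob C \<Omega>1 - b \<bullet> ystar
       \<and> frob C \<Omega>1 - b \<bullet> ystar \<le> ((1 - \<beta>) / \<beta>) * e + DO * sqrt ((2 * \<alpha> / \<beta>) * e)"
    using val cross Wlow Wup be by (simp add: abs_le_iff)
  have c2: "(fnorm (Wstar - C + opAadj A ystar))^2 \<le> (2 * \<alpha> / \<beta>) * e"
    using GGe by (simp add: fnorm_norm G_def[symmetric] power2_norm_eq_inner)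
  show ?thesis
    unfolding Let_def \<Omega>1_def[symmetric, unfolded G_def] e_def[symmetric] DZ_def[symmetric] DO_def[symmetric]
    using AO1 c1 pW(1) c2 c3 unfolding \<Omega>1_def G_def by blast
qed

end
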